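(* Let $T$ be a lush hedge of height $H\ge2$ and let $\Lambda=(\alpha_1,\alpha_2,\beta_2,\beta_3,\beta_4)\in\mathcal B$. Then every matrix $A\in\mathcal{PH}(C^{\Lambda}_{H+1},T)$ has a critical multiplicity list; in fact $\alpha_1,\alpha_2,\beta_2,\beta_3,\beta_4$ witness this.
   Context: Hedges: a rooted tree has a distinguished root; $y$ is a child of adjacent $z$ if the root-to-$y$ path passes through $z$; a leaf is a non-root vertex of degree 1 (in $P_1$ the single vertex is root and leaf). A hedge is a rooted tree that is $P_1$ or in which all leaves are at equal distance from the root. $\mathrm h(u)$ is the distance from $u$ to a nearest leaf; the height of the hedge is that of its root; $V_i(T)$ is the set of vertices of height $i$; $\ell_i(T)=|V_{i-1}(T)|-|V_i(T)|$ for $i\ge1$. A hedge is lush if every vertex of height $\ge2$ has at least three children and every vertex of height $1$ at least two. $P_n$ is the path $1-\cdots-n$ rooted at $1$. $\mathcal R(T)$: real matrices indexed by $V(T)$ with $a_{ij}\neq0$ iff $\{i,j\}\in E(T)$ ($i\ne j$), $a_{ij}a_{ji}>0$ on edges, arbitrary diagonal. Path-to-hedge: for $C=(c_{ij})\in\mathcal R(P_{H+1})$ and $v\in V(T)$ put $v'=H+1-\mathrm h(v)$; $\mathcal{PH}(C,T)$ is the set of $A\in\mathcal R(T)$ with $a_{vv}=c_{v'v'}$ for all $v$ and $\sum_{u\text{ child of }v}a_{vu}a_{uv}=c_{v',v'+1}c_{v'+1,v'}$ for every non-leaf $v$. $\mathcal B$ is the set of $(\alpha_1,\alpha_2,\beta_2,\beta_3,\beta_4)\in\mathbb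 R^5$ with distinct entries satisfying one of: $\beta_2<\alpha_1<\alpha_2<\beta_3<\beta_4$; $\beta_2<\beta_4<\alpha_1<\alpha_2<\beta_3$; $\beta_4<\beta_2<\alpha_1<\alpha_2<\beta_3$ and $\alpha_2+\beta_2>\beta_4+\beta_3$; $\beta_3<\beta_2<\alpha_1<\alpha_2<\beta_4$ and $\alpha_2+\beta_2<\beta_4+\beta_3$; $\beta_3<\beta_2<\beta_4<\alpha_1<\alpha_2$; $\beta_4<\beta_3<\beta_2<\alpha_1<\alpha_2$; $\beta_4<\beta_3<\alpha_2<\alpha_1<\beta_2$; $\beta_3<\alpha_2<\alpha_1<\beta_4<\beta_2$; $\beta_3<\alpha_2<\alpha_1<\beta_2<\beta_4$ and $\alpha_2+\beta_2<\beta_4+\beta_3$; $\beta_4<\alpha_2<\alpha_1<\beta_2<\beta_3$ and $\alpha_2+\beta_2>\beta_4+\beta_3$; $\alpha_2<\alpha_1<\beta_4<\beta_2<\beta_3$; $\alpha_2<\alpha_1<\beta_2<\beta_3<\beta_4$. For $\Lambda\in\mathcal B$, $C^{\Lambda}_n$ is the $n\times n$ tridiagonal matrix with diagonal $(a_n,\dots,a_1)$, superdiagonal $(b_n,\dots,b_2)$, subdiagonal all $1$, where $a_i=\alpha_1$ ($i$ odd), $a_2=-\alpha_1+\alpha_2+\beta_2$, $a_i=\alpha_2$ ($i>2$ even), $b_2=(\beta_2-\alpha_1)(\alpha_1-\alpha_2)$, $b_3=(\beta_3-\alpha_2)(\beta_3-\beta_2)$, $b_4=\frac{(\beta_4-\alpha_1)(\beta_3-\beta_4)(\alpha_2+\beta_2-\beta_3-\beta_4)}{\beta_4-\beta_2}$,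 $b_i=(\beta_j-\alpha_1)(\beta_j-\alpha_2)$ for $i>4$, $j\in\{2,3,4\}$, $i\equiv j\pmod3$. Critical multiplicity list: for a lush hedge $T$ of height $H\ge2$, a matrix $A\in\mathcal R(T)$ has a critical multiplicity list if there exist five distinct reals $\alpha_1,\alpha_2,\beta_2,\beta_3,\beta_4$ (witnesses) with $\mathrm{mult}(\alpha_j,A)\ge\sum_{i\ge j,\ i\equiv j\ (2)}\ell_i(T)$ for $j=1,2$, $\mathrm{mult}(\beta_j,A)\ge\sum_{i\ge j,\ i\equiv j\ (3)}\ell_i(T)$ for $j=2,3,4$, and $\mathrm{mult}(\beta_4,A)<\ell_3(T)$ (multiplicity $0$ allowed, i.e. $\beta_4$ need not be an eigenvalue). *)

theory Defs
  imports "Jordan_Normal_Form.Char_Poly"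
begin

definition is_tree :: "nat \<Rightarrow> (nat \<Rightarrow> nat \<Rightarrow> bool) \<Rightarrow> bool" where
  "is_tree n E \<longleftrightarrow> n \<ge> 1
     \<and> (\<forall>u v. E u v \<longrightarrow> u < n \<and> v < n)
     \<and> (\<forall>u v. E u v \<longrightarrow> E v u)
     \<and> (\<forall>u. \<not> E u u)
     \<and> (\<forall>u<n. \<forall>v<n. (E\<^sup>*\<^sup>*) u v)
     \<and> card {(u, v). u < v \<and> v < n \<and> E u v} = n - 1"

definition is_rooted_tree :: "nat \<Rightarrow> (nat \<Rightarrow> nat \<Rightarrow> bool) \<Rightarrow> nat \<Rightarrow> bool" where
  "is_rooted_tree n E r \<longleftrightarrow> is_tree n E \<and> r < n"

definition tdist :: "(nat \<Rightarrow> nat \<Rightarrow> bool) \<Rightarrow> nat \<Rightarrow> nat \<Rightarrow> nat" where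
  "tdist E u v = (LEAST k. (E ^^ k) u v)"

definition is_child :: "(nat \<Rightarrow> nat \<Rightarrow> bool) \<Rightarrow> nat \<Rightarrow> nat \<Rightarrow> nat \<Rightarrow> bool" where
  "is_child E r y z \<longleftrightarrow> E z y \<and> tdist E r y = tdist E r z + 1"

definition children :: "nat \<Rightarrow> (nat \<Rightarrow> nat \<Rightarrow> bool) \<Rightarrow> nat \<Rightarrow> nat \<Rightarrow> nat set" where
  "children n E r z = {y. y < n \<and> is_child E r y z}"

definition degree :: "nat \<Rightarrow> (nat \<Rightarrow> nat \<Rightarrow> bool) \<Rightarrow> nat \<Rightarrow> nat" where
  "degree n E v = card {u. u < n \<and> E v u}"

definition is_leaf :: "nat \<Rightarrow> (nat \<Rightarrow> nat \<Rightarrow> bool) \<Rightarrow> nat \<Rightarrow> nat \<Rightarrow> bool" where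
  "is_leaf n E r v \<longleftrightarrow> v < n \<and> ((v \<noteq> r \<and> degree n E v = 1) \<or> n = 1)"

definition height :: "nat \<Rightarrow> (nat \<Rightarrow> nat \<Rightarrow> bool) \<Rightarrow> nat \<Rightarrow> nat \<Rightarrow> nat" where
  "height n E r u = Min {tdist E u l | l. is_leaf n E r l}"

definition is_hedge :: "nat \<Rightarrow> (nat \<Rightarrow> nat \<Rightarrow> bool) \<Rightarrow> nat \<Rightarrow> bool" where
  "is_hedge n E r \<longleftrightarrow> is_rooted_tree n E r \<and>
     (n = 1 \<or> (\<forall>l1 l2. is_leaf n E r l1 \<and> is_leaf n E r l2 \<longrightarrow> tdist E r l1 = tdist E r l2))"

definition hedge_height :: "nat \<Rightarrow> (nat \<Rightarrow> nat \<Rightarrow> bool) \<Rightarrow> nat \<Rightarrow> nat" where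
  "hedge_height n E r = height n E r r"

definition Vset :: "nat \<Rightarrow> (nat \<Rightarrow> nat \<Rightarrow> bool) \<Rightarrow> nat \<Rightarrow> nat \<Rightarrow> nat set" where
  "Vset n E r i = {v. v < n \<and> height n E r v = i}"

definition ell :: "nat \<Rightarrow> (nat \<Rightarrow> nat \<Rightarrow> bool) \<Rightarrow> nat \<Rightarrow> nat \<Rightarrow> int" where
  "ell n E r i = int (card (Vset n E r (i - 1))) - int (card (Vset n E r i))"

definition is_lush :: "nat \<Rightarrow> (nat \<Rightarrow> nat \<Rightarrow> bool) \<Rightarrow> nat \<Rightarrow> bool" where
  "is_lush n E r \<longleftrightarrow> is_hedge n E r \<and>
     (\<forall>v<n. (height n E r v \<ge> 2 \<longrightarrow> card (children n E r v) \<ge> 3)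
          \<and> (height n E r v = 1 \<longrightarrow> card (children n E r v) \<ge> 2))"

definition matR :: "nat \<Rightarrow> (nat \<Rightarrow> nat \<Rightarrow> bool) \<Rightarrow> real mat set" where
  "matR n E = {A. A \<in> carrier_mat n n \<and>
     (\<forall>i<n. \<forall>j<n. i \<noteq> j \<longrightarrow> (A $$ (i, j) \<noteq> 0 \<longleftrightarrow> E i j)) \<and>
     (\<forall>i<n. \<forall>j<n. E i j \<longrightarrow> A $$ (i, j) * A $$ (j, i) > 0)}"

definition mult :: "real \<Rightarrow> real mat \<Rightarrow> nat" where
  "mult x A = order x (char_poly A)"

text \<open>Path-to-hedge set PH(C,T). C is given by its entries c i j with 1-based
indices 1..H+1 (the path P_{H+1}). Vertex v corresponds to v' = H+1-h(v).\<close>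
definition PH :: "(nat \<Rightarrow> nat \<Rightarrow> real) \<Rightarrow> nat \<Rightarrow> (nat \<Rightarrow> nat \<Rightarrow> bool) \<Rightarrow> nat \<Rightarrow> real mat set" where
  "PH c n E r = (let H = hedge_height n E r; pr = (\<lambda>v. H + 1 - height n E r v) in
     {A. A \<in> matR n E \<and>
       (\<forall>v<n. A $$ (v, v) = c (pr v) (pr v)) \<and>
       (\<forall>v<n. \<not> is_leaf n E r v \<longrightarrow>
          (\<Sum>u\<in>children n E r v. A $$ (v, u) * A $$ (u, v))
            = c (pr v) (pr v + 1) * c (pr v + 1) (pr v))})"

definition inB :: "real \<Rightarrow> real \<Rightarrow> real \<Rightarrow> real \<Rightarrow> real \<Rightarrow> bool" where
  "inB a1 a2 b2 b3 b4 \<longleftrightarrow> distinct [a1, a2, b2, b3, b4] \<and>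
    ((b2 < a1 \<and> a1 < a2 \<and> a2 < b3 \<and> b3 < b4)
   \<or> (b2 < b4 \<and> b4 < a1 \<and> a1 < a2 \<and> a2 < b3)
   \<or> (b4 < b2 \<and> b2 < a1 \<and> a1 < a2 \<and> a2 < b3 \<and> a2 + b2 > b4 + b3)
   \<or> (b3 < b2 \<and> b2 < a1 \<and> a1 < a2 \<and> a2 < b4 \<and> a2 + b2 < b4 + b3)
   \<or> (b3 < b2 \<and> b2 < b4 \<and> b4 < a1 \<and> a1 < a2)
   \<or> (b4 < b3 \<and> b3 < b2 \<and> b2 < a1 \<and> a1 < a2)
   \<or> (b4 < b3 \<and> b3 < a2 \<and> a2 < a1 \<and> a1 < b2)
   \<or> (b3 < a2 \<and> a2 < a1 \<and> a1 < b4 \<and> b4 < b2)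
   \<or> (b3 < a2 \<and> a2 < a1 \<and> a1 < b2 \<and> b2 < b4 \<and> a2 + b2 < b4 + b3)
   \<or> (b4 < a2 \<and> a2 < a1 \<and> a1 < b2 \<and> b2 < b3 \<and> a2 + b2 > b4 + b3)
   \<or> (a2 < a1 \<and> a1 < b4 \<and> b4 < b2 \<and> b2 < b3)
   \<or> (a2 < a1 \<and> a1 < b2 \<and> b2 < b3 \<and> b3 < b4))"

definition Ca :: "real \<Rightarrow> real \<Rightarrow> real \<Rightarrow> real \<Rightarrow> real \<Rightarrow> nat \<Rightarrow> real" where
  "Ca a1 a2 b2 b3 b4 i =
     (if odd i then a1 else if i = 2 then - a1 + a2 + b2 else a2)"

definition Cb :: "real \<Rightarrow> real \<Rightarrow> real \<Rightarrow> real \<Rightarrow> real \<Rightarrow> nat \<Rightarrow> real" where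
  "Cb a1 a2 b2 b3 b4 i =
     (if i = 2 then (b2 - a1) * (a1 - a2)
      else if i = 3 then (b3 - a2) * (b3 - b2)
      else if i = 4 then (b4 - a1) * (b3 - b4) * (a2 + b2 - b3 - b4) / (b4 - b2)
      else (let bj = (if i mod 3 = 2 then b2 else if i mod 3 = 0 then b3 else b4)
            in (bj - a1) * (bj - a2)))"

text \<open>Entries of the n x n tridiagonal matrix C^Lambda_n, 1-based indices k,l in 1..n:
diagonal (a_n,...,a_1), superdiagonal (b_n,...,b_2), subdiagonal all 1.\<close>
definition Cmat :: "real \<Rightarrow> real \<Rightarrow> real \<Rightarrow> real \<Rightarrow> real \<Rightarrow> nat \<Rightarrow> nat \<Rightarrow> nat \<Rightarrow> real" where
  "Cmat a1 a2 b2 b3 b4 n k l =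
     (if k < 1 \<or> l < 1 \<or> k > n \<or> l > n then 0
      else if k = l then Ca a1 a2 b2 b3 b4 (n + 1 - k)
      else if l = k + 1 then Cb a1 a2 b2 b3 b4 (n + 1 - k)
      else if k = l + 1 then 1
      else 0)"

definition witnesses_critical :: "nat \<Rightarrow> (nat \<Rightarrow> nat \<Rightarrow> bool) \<Rightarrow> nat \<Rightarrow> real mat
    \<Rightarrow> real \<Rightarrow> real \<Rightarrow> real \<Rightarrow> real \<Rightarrow> real \<Rightarrow> bool" where
  "witnesses_critical n E r A a1 a2 b2 b3 b4 \<longleftrightarrow>
     distinct [a1, a2, b2, b3, b4] \<and>
     int (mult a1 A) \<ge> (\<Sum>i\<in>{i. 1 \<le> i \<and> i \<le> n + 1 \<and> i mod 2 = 1 mod 2}. ell n E r i) \<and>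
     int (mult a2 A) \<ge> (\<Sum>i\<in>{i. 2 \<le> i \<and> i \<le> n + 1 \<and> i mod 2 = 2 mod 2}. ell n E r i) \<and>
     int (mult b2 A) \<ge> (\<Sum>i\<in>{i. 2 \<le> i \<and> i \<le> n + 1 \<and> i mod 3 = 2 mod 3}. ell n E r i) \<and>
     int (mult b3 A) \<ge> (\<Sum>i\<in>{i. 3 \<le> i \<and> i \<le> n + 1 \<and> i mod 3 = 3 mod 3}. ell n E r i) \<and>
     int (mult b4 A) \<ge> (\<Sum>i\<in>{i. 4 \<le> i \<and> i \<le> n + 1 \<and> i mod 3 = 4 mod 3}. ell n E r i) \<and>
     int (mult b4 A) < ell n E r 3"

definition has_critical_mult_list :: "nat \<Rightarrow> (nat \<Rightarrow> nat \<Rightarrow> bool) \<Rightarrow> nat \<Rightarrow> real mat \<Rightarrow> bool" where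
  "has_critical_mult_list n E r A \<longleftrightarrow>
     (\<exists>a1 a2 b2 b3 b4. witnesses_critical n E r A a1 a2 b2 b3 b4)"

end

theory Submission
  imports Defs
begin


fun qp :: "(nat \<Rightarrow> real) \<Rightarrow> (nat \<Rightarrow> real) \<Rightarrow> nat \<Rightarrow> real poly" where
  "qp a b 0 = 1"
| "qp a b (Suc 0) = [:- a 1, 1:]"
| "qp a b (Suc (Suc i)) = [:- a (i+2), 1:] * qp a b (Suc i) - Polynomial.smult (b (i+2)) (qp a b i)"

lemma qp_eval: "poly (qp a b (Suc (Suc i))) x = (x - a (i+2)) * poly (qp a b (Suc i)) x - b (i+2) * poly (qp a b i) x"
  by (simp add: algebra_simps)

lemma qp_eval2: "i \<ge> 2 \<Longrightarrow> poly (qp a b i) x = (x - a i) * poly (qp a b (i-1)) x - b i * poly (qp a b (i-2)) x"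
  by (cases i rule: nat.exhaust; cases "i - 1" rule: nat.exhaust) (auto simp: numeral_2_eq_2 algebra_simps)

definition W where "W a b i x = poly (pderiv (qp a b i)) x * poly (qp a b (i-1)) x - poly (qp a b i) x * poly (pderiv (qp a b (i-1))) x"

lemma W_pos: "i \<ge> 1 \<Longrightarrow> (\<forall>k. 2 \<le> k \<and> k \<le> i \<longrightarrow> b k > 0) \<Longrightarrow> W a b i x > 0"
proof (induction i rule: nat_induct_at_least)
  case base
  then show ?case by (simp add: W_def pderiv_pCons)
next
  case (Suc m)
  have "W a b (Suc m) x = (poly (qp a b m) x)^2 + b (m+1) * W a b m x"
  proof (cases m)
    case 0 then show ?thesis using Suc by auto
  next
    case (Suc k)
    then show ?thesis unfolding W_def
      by (simp add: pderiv_mult pderiv_diff pderiv_smult pderiv_pCons pderiv_add algebra_simps power2_eq_square)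
  qed
  moreover have "b (m+1) > 0" using Suc by auto
  moreover have "W a b m x > 0" using Suc by auto
  ultimately show ?case by (smt (verit) mult_pos_pos zero_le_power2)
qed

lemma qp_nz: "(\<forall>k. 2 \<le> k \<and> k \<le> i \<longrightarrow> b k > 0) \<Longrightarrow> qp a b i \<noteq> 0"
proof (cases "i = 0")
  case False
  assume h: "\<forall>k. 2 \<le> k \<and> k \<le> i \<longrightarrow> b k > 0"
  show ?thesis
  proof
    assume "qp a b i = 0"
    then have "W a b i 0 = 0" by (simp add: W_def)
    with W_pos[of i b a 0] h False show False by auto
  qed
qed simp

lemma order_le1: assumes "i \<ge> 1" "\<forall>k. 2 \<le> k \<and> k \<le> i \<longrightarrow> b k > 0"
  shows "order x (qp a b i) \<le> 1"
proof (rule ccontr)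
  assume "\<not> ?thesis"
  hence o: "order x (qp a b i) \<ge> 2" by simp
  have r1: "poly (qp a b i) x = 0" using o order_root by fastforce
  have r2: "poly (pderiv (qp a b i)) x = 0"
  proof (cases "pderiv (qp a b i) = 0")
    case False
    have nz: "qp a b i \<noteq> 0" using qp_nz[OF assms(2)] .
    from order_pderiv[OF nz r1] o have "order x (pderiv (qp a b i)) \<ge> 1" by simp
    thus ?thesis using order_root by fastforce
  qed simp
  have "W a b i x = 0" using r1 r2 by (simp add: W_def)
  with W_pos[OF assms, of a x] show False by simp
qed


locale prm = fixes a1 a2 b2 b3 b4 :: real
begin
abbreviation "ca \<equiv> Ca a1 a2 b2 b3 b4"
abbreviation "cb \<equiv> Cb a1 a2 b2 b3 b4"
definition Q where "Q i x = poly (qp ca cb i) x"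

lemma Q0: "Q 0 x = 1" by (simp add: Q_def)
lemma Q1: "Q 1 x = x - a1" by (simp add: Q_def Ca_def)
lemma Q2: "Q 2 x = (x - a2) * (x - b2)"
  by (simp add: Q_def Ca_def Cb_def numeral_2_eq_2 algebra_simps)
lemma Qrec: "i \<ge> 2 \<Longrightarrow> Q i x = (x - ca i) * Q (i-1) x - cb i * Q (i-2) x"
  unfolding Q_def by (rule qp_eval2)
lemma Q3: "Q 3 x = (x - a1) * ((x - a2) * (x - b2) - (b3 - a2) * (b3 - b2))"
proof -
  have "Q 3 x = (x - a1) * Q 2 x - (b3-a2)*(b3-b2) * Q 1 x" using Qrec[of 3 x] by (simp add: Ca_def Cb_def)
  then show ?thesis unfolding Q2 Q1 by (simp add: algebra_simps)
qed

lemma ca_big: "i \<ge> 3 \<Longrightarrow> ca i = (if odd i then a1 else a2)"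
  by (simp add: Ca_def)

lemma cb_big: "i \<ge> 5 \<Longrightarrow> cb i = (if i mod 3 = 2 then (b2-a1)*(b2-a2) else if i mod 3 = 0 then (b3-a1)*(b3-a2) else (b4-a1)*(b4-a2))"
  by (simp add: Cb_def Let_def)

lemma alpha_roots: "(odd i \<longrightarrow> Q i a1 = 0) \<and> (even i \<and> i \<ge> 2 \<longrightarrow> Q i a2 = 0)"
proof (induction i rule: less_induct)
  case (less i)
  show ?case
  proof (cases "i \<ge> 3")
    case True
    have r: "Q i x = (x - ca i) * Q (i-1) x - cb i * Q (i-2) x" for x using Qrec True by simp
    have o: "Q (i-2) a1 = 0" if "odd i" using less[of "i-2"] True that by auto
    have ev: "Q (i-2) a2 = 0" if "even i"
    proof -
      have "i \<ge> 4" using True that by presburger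
      then show "Q (i-2) a2 = 0" using less[of "i-2"] that by auto
    qed
    show ?thesis
    proof (intro conjI impI)
      assume "odd i" then show "Q i a1 = 0" using r[of a1] o ca_big[OF True] by simp
    next
      assume "even i \<and> 2 \<le> i" then show "Q i a2 = 0" using r[of a2] ev ca_big[OF True] by simp
    qed
  next
    case False
    then have "i = 0 \<or> i = 1 \<or> i = 2" by auto
    then show ?thesis using Q1 Q2 by auto
  qed
qed

lemma beta_step: assumes "i \<ge> 2" "Q i y = 0" "cb (i+3) = (y-a1)*(y-a2)"
  shows "Q (i+3) y = 0"
proof -
  have e: "Q (i+3) y = (y - ca (i+3)) * Q (i+2) y - cb (i+3) * Q (i+1) y"
    using Qrec[of "i+3" y] by simp
  have f: "Q (i+2) y = (y - ca (i+2)) * Q (i+1) y - cb (i+2) * Q i y"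
    using Qrec[of "i+2" y] by simp
  have "(y - ca (i+3)) * (y - ca (i+2)) = (y-a1)*(y-a2)"
    using ca_big[of "i+3"] ca_big[of "i+2"] assms(1) by auto
  have f2: "Q (i+2) y = (y - ca (i+2)) * Q (i+1) y" using f assms(2) by simp
  have "Q (i+3) y = ((y - ca (i+3)) * (y - ca (i+2)) - (y-a1)*(y-a2)) * Q (i+1) y"
    unfolding e f2 assms(3) by (simp only: left_diff_distrib mult.assoc)
  also have "\<dots> = 0" using \<open>(y - ca (i+3)) * (y - ca (i+2)) = (y-a1)*(y-a2)\<close> by simp
  finally show ?thesis .
qed

lemma beta_roots: assumes "b4 \<noteq> b2"
  shows "Q (2+3*k) b2 = 0 \<and> Q (3+3*k) b3 = 0 \<and> Q (4+3*k) b4 = 0"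
proof (induction k)
  case 0
  have "Q 4 b4 = (b4 - a2) * Q 3 b4 - cb 4 * Q 2 b4"
    using Qrec[of 4 b4] by (simp add: Ca_def)
  also have "\<dots> = 0"
  proof -
    have d: "b4 - b2 \<noteq> 0" using assms by simp
    have "cb 4 * (b4 - b2) = (b4 - a1) * (b3 - b4) * (a2 + b2 - b3 - b4)" using d by (simp add: Cb_def)
    moreover have "(b4 - a2) * Q 3 b4 - cb 4 * Q 2 b4 = (b4-a2) * ((b4-a1)*((b4-a2)*(b4-b2) - (b3-a2)*(b3-b2)) - cb 4 * (b4-b2))"
      unfolding Q3 Q2 by (simp add: algebra_simps)
    moreover have "(b4-a1)*((b4-a2)*(b4-b2) - (b3-a2)*(b3-b2)) = (b4 - a1) * (b3 - b4) * (a2 + b2 - b3 - b4)"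
      by (simp add: algebra_simps)
    ultimately show ?thesis by simp
  qed
  finally show ?case using Q2 Q3 by simp
next
  case (Suc k)
  have m1: "(2+3*k+3) mod 3 = 2" "(3+3*k+3) mod 3 = 0" "(4+3*k+3) mod 3 = 1" by presburger+
  have c1: "cb (2+3*k+3) = (b2-a1)*(b2-a2)" using cb_big[of "2+3*k+3"] m1 by simp
  have c2: "cb (3+3*k+3) = (b3-a1)*(b3-a2)" using cb_big[of "3+3*k+3"] m1 by simp
  have c3: "cb (4+3*k+3) = (b4-a1)*(b4-a2)" using cb_big[of "4+3*k+3"] m1 by simp
  have e: "2+3*Suc k = 2+3*k+3" "3+3*Suc k = 3+3*k+3" "4+3*Suc k = 4+3*k+3" by simp_all
  show ?case unfolding e using beta_step[OF _ _ c1] beta_step[OF _ _ c2] beta_step[OF _ _ c3] Suc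
    by simp
qed

lemma b4_nonroot_aux: assumes d: "distinct [a1, a2, b2, b3, b4]" and g: "a2 + b2 \<noteq> b3 + b4"
  shows "Q (3*k+2) b4 \<noteq> 0 \<and> Q (3*k+3) b4 \<noteq> 0"
proof (induction k)
  case 0
  have "Q 3 b4 = (b4-a1)*((b4-b3)*(b4 - (a2+b2-b3)))" unfolding Q3 by (simp add: algebra_simps)
  moreover have "b4 - (a2+b2-b3) \<noteq> 0" using g by simp
  ultimately have "Q 3 b4 \<noteq> 0" using d by force
  moreover have "Q 2 b4 \<noteq> 0" using d Q2 by force
  ultimately show ?case by (simp add: numeral_2_eq_2)
next
  case (Suc k)
  have "b4 \<noteq> b2" using d by auto
  then have z: "Q (3*k+4) b4 = 0" using beta_roots[of k] by (simp add: add.commute)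
  have m1: "(3*k+5) mod 3 = 2" by presburger
  have c1: "cb (3*k+5) = (b2-a1)*(b2-a2)" using cb_big[of "3*k+5"] m1 by simp
  have e1: "Q (3*k+5) b4 = (b4 - ca (3*k+5)) * Q (3*k+4) b4 - cb (3*k+5) * Q (3*k+3) b4"
    using Qrec[of "3*k+5" b4] by (simp add: add.commute)
  have "b2 \<noteq> a1" "b2 \<noteq> a2" using d by auto
  then have n1: "Q (3*k+5) b4 \<noteq> 0" using e1 z c1 Suc.IH by simp
  have e2: "Q (3*k+6) b4 = (b4 - ca (3*k+6)) * Q (3*k+5) b4 - cb (3*k+6) * Q (3*k+4) b4"
    using Qrec[of "3*k+6" b4] by (simp add: add.commute)
  have "b4 - ca (3*k+6) \<noteq> 0" using ca_big[of "3*k+6"] d by auto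
  then have n2: "Q (3*k+6) b4 \<noteq> 0" using e2 z n1 by simp
  have e: "3 * Suc k + 2 = 3*k+5" "3 * Suc k + 3 = 3*k+6" by simp_all
  show ?case unfolding e using n1 n2 by simp
qed

lemma b4_nonroot: assumes d: "distinct [a1, a2, b2, b3, b4]" and g: "a2 + b2 \<noteq> b3 + b4"
  and i: "i mod 3 \<noteq> 1 \<or> i \<le> 1"
  shows "Q i b4 \<noteq> 0"
proof -
  consider "i = 0" | "i = 1" | k where "i = 3*k+2" | k where "i = 3*k+3"
  proof -
    have "i = 0 \<or> i = 1 \<or> (\<exists>k. i = 3*k+2) \<or> (\<exists>k. i = 3*k+3)" using i by presburger
    then show ?thesis using that by blast
  qed
  then show ?thesis
    using b4_nonroot_aux[OF d g] Q0 Q1 d by cases auto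
qed

end


locale hedge =
  fixes n :: nat and E :: "nat \<Rightarrow> nat \<Rightarrow> bool" and r :: nat
  assumes lush: "is_lush n E r" and H2: "hedge_height n E r \<ge> 2"
begin

lemma hedge: "is_hedge n E r" using lush by (simp add: is_lush_def)
lemma tree: "is_tree n E" and rn: "r < n" using hedge by (auto simp: is_hedge_def is_rooted_tree_def)
lemma Ebound: "E u v \<Longrightarrow> u < n \<and> v < n" using tree by (simp add: is_tree_def)
lemma Esym: "E u v \<Longrightarrow> E v u" using tree by (simp add: is_tree_def)
lemma Eirr: "\<not> E u u" using tree by (simp add: is_tree_def)
lemma ecard: "card {(u, v). u < v \<and> v < n \<and> E u v} = n - 1" using tree by (simp add: is_tree_def)

lemma conn: "u < n \<Longrightarrow> v < n \<Longrightarrow> \<exists>k. (E ^^ k) u v"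
proof -
  assume a: "u < n" "v < n"
  have "(E\<^sup>*\<^sup>*) u v" using tree a unfolding is_tree_def by blast
  then show ?thesis by (rule rtranclp_imp_relpowp)
qed

lemma att: "u < n \<Longrightarrow> v < n \<Longrightarrow> (E ^^ tdist E u v) u v"
proof -
  assume a: "u < n" "v < n"
  obtain k where "(E ^^ k) u v" using conn[OF a] by blast
  then show ?thesis unfolding tdist_def by (rule LeastI)
qed

lemma tle: "(E ^^ k) u v \<Longrightarrow> tdist E u v \<le> k"
  unfolding tdist_def by (rule Least_le)

lemma tri: "u < n \<Longrightarrow> v < n \<Longrightarrow> w < n \<Longrightarrow> tdist E u w \<le> tdist E u v + tdist E v w"
proof -
  assume a: "u < n" "v < n" "w < n"
  have "(E ^^ (tdist E u v + tdist E v w)) u w"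
    unfolding relpowp_add using att[OF a(1,2)] att[OF a(2,3)] by auto
  then show ?thesis by (rule tle)
qed

abbreviation "dep v \<equiv> tdist E r v"

lemma dep_r: "dep r = 0" using tle[of 0 r r] by simp

lemma dep0: "v < n \<Longrightarrow> dep v = 0 \<Longrightarrow> v = r"
  using att[OF rn, of v] by simp

lemma dep_edge: "E u v \<Longrightarrow> dep v \<le> dep u + 1"
proof -
  assume e: "E u v"
  then have "(E ^^ 1) u v" by auto
  then have "tdist E u v \<le> 1" by (rule tle)
  then show ?thesis using tri[OF rn, of u v] Ebound[OF e] by simp
qed

lemma pred_ex: "v < n \<Longrightarrow> v \<noteq> r \<Longrightarrow> \<exists>u. u < n \<and> E u v \<and> dep u + 1 = dep v"
proof -
  assume v: "v < n" "v \<noteq> r"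
  have a: "(E ^^ dep v) r v" using att[OF rn v(1)] .
  have "dep v \<noteq> 0" using dep0 v by auto
  then obtain d where d: "dep v = Suc d" by (cases "dep v") auto
  with a obtain u where u: "(E ^^ d) r u" "E u v" by (auto elim: relpowp_Suc_E)
  have "dep u \<le> d" using tle[OF u(1)] .
  moreover have "dep v \<le> dep u + 1" using dep_edge[OF u(2)] .
  ultimately show ?thesis using u(2) d Ebound[OF u(2)] by (intro exI[of _ u]) auto
qed

definition par where "par v = (SOME u. u < n \<and> E u v \<and> dep u + 1 = dep v)"

lemma par: assumes "v < n" "v \<noteq> r" shows "par v < n \<and> E (par v) v \<and> dep (par v) + 1 = dep v"
proof -
  have "\<exists>u. u < n \<and> E u v \<and> dep u + 1 = dep v" using pred_ex[OF assms] .
  then have "(SOME u. u < n \<and> E u v \<and> dep u + 1 = dep v) < n \<and> E (SOME u. u < n \<and> E u v \<and> dep u + 1 = dep v) v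
     \<and> dep (SOME u. u < n \<and> E u v \<and> dep u + 1 = dep v) + 1 = dep v" by (rule someI_ex)
  then show ?thesis unfolding par_def .
qed

lemma minmax_set: "{a, b} = {min a b, max a b::nat}" by (auto simp: min_def max_def)



definition fe where "fe v = (min v (par v), max v (par v))"

lemma fe_set: "fe v = fe w \<Longrightarrow> {v, par v} = {w, par w}"
  unfolding fe_def by (metis minmax_set prod.inject)

lemma fe_inj: "inj_on fe ({..<n} - {r})"
proof (rule inj_onI)
  fix v w assume v: "v \<in> {..<n} - {r}" and w: "w \<in> {..<n} - {r}" and e: "fe v = fe w"
  have pv: "dep (par v) + 1 = dep v" and pw: "dep (par w) + 1 = dep w" using par v w by auto
  from e have "{v, par v} = {w, par w}" by (rule fe_set)
  then have "v = w \<or> (v = par w \<and> w = par v)" by (auto simp: doubleton_eq_iff)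
  then show "v = w" using pv pw by auto
qed

lemma fe_onto: "fe ` ({..<n} - {r}) = {(u, v). u < v \<and> v < n \<and> E u v}"
proof (rule card_subset_eq)
  show "finite {(u, v). u < v \<and> v < n \<and> E u v}"
    by (rule finite_subset[of _ "{..<n} \<times> {..<n}"]) auto
  show "fe ` ({..<n} - {r}) \<subseteq> {(u, v). u < v \<and> v < n \<and> E u v}"
  proof
    fix x assume "x \<in> fe ` ({..<n} - {r})"
    then obtain v where v: "v < n" "v \<noteq> r" "x = fe v" by auto
    have p: "par v < n" "E (par v) v" using par[OF v(1,2)] by auto
    have "par v \<noteq> v" using p(2) Eirr by metis
    then show "x \<in> {(u, v). u < v \<and> v < n \<and> E u v}" using v p Esym
      by (auto simp: fe_def min_def max_def)
  qed
  show "card (fe ` ({..<n} - {r})) = card {(u, v). u < v \<and> v < n \<and> E u v}"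
    using card_image[OF fe_inj] ecard rn by simp
qed

lemma edge_par: assumes e: "E u v" shows "(v \<noteq> r \<and> u = par v) \<or> (u \<noteq> r \<and> v = par u)"
proof -
  have uv: "u < n" "v < n" using Ebound[OF e] by auto
  have "u \<noteq> v" using e Eirr by metis
  then have "(min u v, max u v) \<in> {(u, v). u < v \<and> v < n \<and> E u v}" using e Esym uv
    by (auto simp: min_def max_def)
  then have "(min u v, max u v) \<in> fe ` ({..<n} - {r})" using fe_onto by simp
  then obtain w where w0: "w \<in> {..<n} - {r}" "fe w = (min u v, max u v)" by (rule imageE) simp
  then have w: "w < n" "w \<noteq> r" "fe w = (min u v, max u v)" by auto
  then have "{w, par w} = {u, v}" unfolding fe_def by (metis minmax_set prod.inject)
  then show ?thesis using w by (auto simp: doubleton_eq_iff)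
qed

lemma child_iff: "y < n \<Longrightarrow> z < n \<Longrightarrow> is_child E r y z \<longleftrightarrow> y \<noteq> r \<and> z = par y"
proof
  assume y: "y < n" and z: "z < n" and c: "is_child E r y z"
  then have e: "E z y" and d: "dep y = dep z + 1" by (auto simp: is_child_def)
  show "y \<noteq> r \<and> z = par y"
  proof (cases "y \<noteq> r \<and> z = par y")
    case False
    then have "z \<noteq> r" "y = par z" using edge_par[OF e] by auto
    then show ?thesis using par[OF z] d by simp
  qed simp
next
  assume y: "y < n" and z: "z < n" and c: "y \<noteq> r \<and> z = par y"
  then show "is_child E r y z" using par[OF y] by (auto simp: is_child_def)
qed

lemma children_eq: "z < n \<Longrightarrow> children n E r z = {y. y < n \<and> y \<noteq> r \<and> par y = z}"
  unfolding children_def using child_iff by auto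

end


context hedge begin

lemma n_ne1: "n \<noteq> 1"
proof
  assume n1: "n = 1"
  then have r0: "r = 0" using rn by simp
  have "{tdist E r l |l. is_leaf n E r l} = {0}"
  proof -
    have "is_leaf n E r l \<longleftrightarrow> l = 0" for l using n1 by (auto simp: is_leaf_def)
    then show ?thesis using r0 dep_r by auto
  qed
  then have "hedge_height n E r = 0" unfolding hedge_height_def height_def by simp
  then show False using H2 by simp
qed

lemma n2: "n \<ge> 2" using n_ne1 rn by linarith

lemma r_child: "\<exists>y. y < n \<and> y \<noteq> r \<and> par y = r"
proof -
  define v :: nat where "v = (if r = 0 then 1 else 0)"
  have v: "v < n" "v \<noteq> r" using n2 by (auto simp: v_def)
  have a: "(E ^^ dep v) r v" using att[OF rn v(1)] .
  have "dep v \<noteq> 0" using dep0 v by auto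
  then obtain d where d: "dep v = Suc d" by (cases "dep v") auto
  with a obtain y where y: "E r y" using relpowp_Suc_D2 by metis
  then show ?thesis using edge_par[OF y] Ebound[OF y] by auto
qed

lemma nochild_leaf: assumes v: "v < n" and nc: "\<forall>y. y < n \<and> y \<noteq> r \<longrightarrow> par y \<noteq> v"
  shows "is_leaf n E r v"
proof -
  have vr: "v \<noteq> r" using r_child nc by auto
  have 1: "u = par v" if "u < n" "E v u" for u using edge_par[OF that(2)] nc that(1) by auto
  have 2: "par v < n" "E v (par v)" using par[OF v vr] Esym by auto
  have "{u. u < n \<and> E v u} = {par v}" using 1 2 by blast
  then have "degree n E v = 1" unfolding degree_def by simp
  then show ?thesis using v vr by (simp add: is_leaf_def)
qed

definition ch where "ch a b \<longleftrightarrow> b < n \<and> b \<noteq> r \<and> par b = a"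

lemma chain: "(ch ^^ k) v w \<Longrightarrow> v < n \<Longrightarrow> w < n \<and> dep w = dep v + k \<and> (E ^^ k) v w"
proof (induction k arbitrary: w)
  case 0 then show ?case by auto
next
  case (Suc k)
  from Suc.prems(1) obtain y where y: "(ch ^^ k) v y" "ch y w" by (auto elim: relpowp_Suc_E)
  from Suc.IH[OF y(1) Suc.prems(2)] have ih: "y < n" "dep y = dep v + k" "(E ^^ k) v y" by auto
  from y(2) have w: "w < n" "w \<noteq> r" "par w = y" by (auto simp: ch_def)
  have p: "E y w" "dep y + 1 = dep w" using par[OF w(1,2)] w(3) by auto
  have "(E ^^ Suc k) v w" using ih(3) p(1) by (rule relpowp_Suc_I)
  then show ?case using w ih p by simp
qed

lemma leaf_below: assumes v: "v < n" shows "\<exists>k w. (ch ^^ k) v w \<and> is_leaf n E r w"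
proof -
  define R where "R = {w. \<exists>k. (ch ^^ k) v w}"
  have Rn: "R \<subseteq> {..<n}" using chain v unfolding R_def by blast
  have fin: "finite R" using Rn finite_subset by blast
  have "(ch ^^ 0) v v" by simp
  then have vR: "v \<in> R" unfolding R_def by blast
  define m where "m = Max (dep ` R)"
  have "m \<in> dep ` R" unfolding m_def using fin vR by (intro Max_in) auto
  then obtain w where w: "w \<in> R" "dep w = m" by auto
  then obtain k where k: "(ch ^^ k) v w" unfolding R_def by auto
  have wn: "w < n" using w Rn by auto
  have "\<forall>y. y < n \<and> y \<noteq> r \<longrightarrow> par y \<noteq> w"
  proof (intro allI impI notI)
    fix y assume y: "y < n \<and> y \<noteq> r" and py: "par y = w"
    then have "ch w y" by (simp add: ch_def)
    then have "(ch ^^ Suc k) v y" using k by (intro relpowp_Suc_I)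
    then have yR: "y \<in> R" unfolding R_def by blast
    then have "dep y \<le> m" unfolding m_def using fin by (intro Max_ge) auto
    moreover have "dep y = m + 1" using par[of y] y py w by auto
    ultimately show False by simp
  qed
  then have "is_leaf n E r w" using nochild_leaf wn by blast
  then show ?thesis using k by blast
qed

lemma leaf_n: "is_leaf n E r l \<Longrightarrow> l < n" by (simp add: is_leaf_def)

lemma leaf_same: "is_leaf n E r l1 \<Longrightarrow> is_leaf n E r l2 \<Longrightarrow> dep l1 = dep l2"
proof -
  have "\<forall>l1 l2. is_leaf n E r l1 \<and> is_leaf n E r l2 \<longrightarrow> tdist E r l1 = tdist E r l2"
    using hedge n_ne1 by (simp add: is_hedge_def)
  then show "is_leaf n E r l1 \<Longrightarrow> is_leaf n E r l2 \<Longrightarrow> dep l1 = dep l2" by blast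
qed

definition l0 where "l0 = (SOME l. is_leaf n E r l)"
lemma l0: "is_leaf n E r l0"
proof -
  have "\<exists>l. is_leaf n E r l" using leaf_below[OF rn] by blast
  then show ?thesis unfolding l0_def by (rule someI_ex)
qed

lemma dep_le: "v < n \<Longrightarrow> dep v \<le> dep l0"
proof -
  assume v: "v < n"
  obtain k w where kw: "(ch ^^ k) v w" "is_leaf n E r w" using leaf_below[OF v] by blast
  have "dep w = dep v + k" using chain[OF kw(1) v] by simp
  moreover have "dep w = dep l0" using leaf_same[OF kw(2) l0] .
  ultimately show ?thesis by simp
qed

lemma height_eq0: assumes v: "v < n" shows "height n E r v = dep l0 - dep v"
proof -
  obtain k w where kw: "(ch ^^ k) v w" "is_leaf n E r w" using leaf_below[OF v] by blast
  have c: "w < n" "dep w = dep v + k" "(E ^^ k) v w" using chain[OF kw(1) v] by auto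
  have dw: "dep w = dep l0" using leaf_same[OF kw(2) l0] .
  have lb: "dep l0 - dep v \<le> tdist E v l" if l: "is_leaf n E r l" for l
  proof -
    have "dep l \<le> dep v + tdist E v l" using tri[OF rn v leaf_n[OF l]] .
    then show ?thesis using leaf_same[OF l l0] by simp
  qed
  have tw: "tdist E v w = dep l0 - dep v"
  proof -
    have "tdist E v w \<le> k" using tle[OF c(3)] .
    moreover have "dep l0 - dep v \<le> tdist E v w" using lb[OF kw(2)] .
    ultimately show ?thesis using c(2) dw by linarith
  qed
  have S: "{tdist E v l |l. is_leaf n E r l} = (\<lambda>l. tdist E v l) ` {l. is_leaf n E r l}" by blast
  have "{l. is_leaf n E r l} \<subseteq> {..<n}" using leaf_n by blast
  then have fin: "finite {l. is_leaf n E r l}" by (rule finite_subset) simp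
  show ?thesis unfolding height_def S
  proof (rule Min_eqI)
    show "finite ((\<lambda>l. tdist E v l) ` {l. is_leaf n E r l})" using fin by simp
    show "\<And>y. y \<in> (\<lambda>l. tdist E v l) ` {l. is_leaf n E r l} \<Longrightarrow> dep l0 - dep v \<le> y" using lb by blast
    have "tdist E v w \<in> (\<lambda>l. tdist E v l) ` {l. is_leaf n E r l}" using kw(2) by blast
    then show "dep l0 - dep v \<in> (\<lambda>l. tdist E v l) ` {l. is_leaf n E r l}" using tw by simp
  qed
qed

abbreviation "HH \<equiv> hedge_height n E r"

lemma HH_eq: "HH = dep l0" unfolding hedge_height_def using height_eq0[OF rn] dep_r by simp

lemma height_eq: "v < n \<Longrightarrow> height n E r v = HH - dep v"
  using height_eq0 HH_eq by simp

lemma dep_leH: "v < n \<Longrightarrow> dep v \<le> HH" using dep_le HH_eq by simp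

lemma leaf_dep: "is_leaf n E r l \<Longrightarrow> dep l = HH" using leaf_same[OF _ l0] HH_eq by simp

lemma leaf_height: "is_leaf n E r l \<Longrightarrow> height n E r l = 0"
  using leaf_dep height_eq leaf_n by simp

lemma child_height: "y < n \<Longrightarrow> y \<noteq> r \<Longrightarrow> height n E r y + 1 = height n E r (par y)"
proof -
  assume y: "y < n" "y \<noteq> r"
  have p: "par y < n" "dep (par y) + 1 = dep y" using par[OF y] by auto
  show ?thesis using height_eq[OF y(1)] height_eq[OF p(1)] p dep_leH[OF y(1)] by simp
qed

lemma haschild_height: "y < n \<Longrightarrow> y \<noteq> r \<Longrightarrow> par y = v \<Longrightarrow> height n E r v \<ge> 1"
  using child_height by fastforce

lemma nonleaf_child: "v < n \<Longrightarrow> \<not> is_leaf n E r v \<Longrightarrow> \<exists>y. y < n \<and> y \<noteq> r \<and> par y = v"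
  using nochild_leaf by blast

lemma child_nonleaf: "y < n \<Longrightarrow> y \<noteq> r \<Longrightarrow> par y = v \<Longrightarrow> \<not> is_leaf n E r v"
  using haschild_height leaf_height by fastforce

lemma height_le: "v < n \<Longrightarrow> height n E r v \<le> HH" using height_eq by simp

end


context hedge begin

abbreviation "V h \<equiv> Vset n E r h"

lemma V_eq: "V h = {v. v < n \<and> HH - dep v = h}"
  unfolding Vset_def using height_eq by auto

lemma V_fin: "finite (V h)" unfolding Vset_def by simp

lemma V_empty: "h > HH \<Longrightarrow> V h = {}" unfolding V_eq by auto

lemma V_top: "V HH = {r}"
proof -
  have "v = r" if "v < n" "HH - dep v = HH" for v
  proof -
    have "dep v \<le> HH" using dep_leH[OF that(1)] .
    then have "dep v = 0" using that(2) H2 by linarith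
    then show ?thesis using dep0 that(1) by simp
  qed
  then show ?thesis unfolding V_eq using rn dep_r by auto
qed

lemma child_in_V: "v \<in> V h \<Longrightarrow> y \<in> children n E r v \<Longrightarrow> y \<in> V (h - 1)"
proof -
  assume v: "v \<in> V h" and y: "y \<in> children n E r v"
  have vn: "v < n" and hv: "height n E r v = h" using v by (auto simp: Vset_def)
  have yy: "y < n" "y \<noteq> r" "par y = v" using y children_eq[OF vn] by auto
  have "height n E r y + 1 = h" using child_height[OF yy(1,2)] yy(3) hv by simp
  then show ?thesis using yy(1) by (auto simp: Vset_def)
qed

lemma card_V: assumes h: "1 \<le> h"
  shows "(if 2 \<le> h then 3 else 2) * card (V h) \<le> card (V (h - 1))"
proof -
  define K :: nat where "K = (if 2 \<le> h then 3 else 2)"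
  have sub: "(\<Union>v\<in>V h. children n E r v) \<subseteq> V (h - 1)" using child_in_V by blast
  have finc: "finite (children n E r v)" for v unfolding children_def by simp
  have disj: "\<forall>v\<in>V h. \<forall>w\<in>V h. v \<noteq> w \<longrightarrow> children n E r v \<inter> children n E r w = {}"
  proof (intro ballI impI)
    fix v w assume v: "v \<in> V h" and w: "w \<in> V h" and vw: "v \<noteq> w"
    have "v < n" "w < n" using v w by (auto simp: Vset_def)
    then show "children n E r v \<inter> children n E r w = {}" using children_eq vw by auto
  qed
  have cu: "card (\<Union>v\<in>V h. children n E r v) = (\<Sum>v\<in>V h. card (children n E r v))"
    using card_UN_disjoint[OF V_fin] finc disj by blast
  have ge: "K \<le> card (children n E r v)" if v: "v \<in> V h" for v
  proof -
    have vn: "v < n" and hv: "height n E r v = h" using v by (auto simp: Vset_def)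
    have "(height n E r v \<ge> 2 \<longrightarrow> card (children n E r v) \<ge> 3)
          \<and> (height n E r v = 1 \<longrightarrow> card (children n E r v) \<ge> 2)"
      using lush vn unfolding is_lush_def by blast
    then show ?thesis using hv h unfolding K_def by auto
  qed
  have "card (V h) * K \<le> (\<Sum>v\<in>V h. card (children n E r v))"
    using sum_bounded_below[of "V h" K "\<lambda>v. card (children n E r v)"] ge by simp
  also have "\<dots> \<le> card (V (h - 1))" using cu card_mono[OF V_fin sub] by simp
  finally show ?thesis unfolding K_def by (simp add: mult.commute)
qed

lemma card_V_mono: "1 \<le> h \<Longrightarrow> card (V h) \<le> card (V (h - 1))"
  using card_V[of h] by (auto split: if_splits)

lemma V_ne: "h \<le> HH \<Longrightarrow> card (V h) \<ge> 1"
proof (induction "HH - h" arbitrary: h)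
  case 0
  then have "h = HH" by simp
  then show ?case using V_top by simp
next
  case (Suc j)
  then have "HH - (h + 1) = j" "h + 1 \<le> HH" by auto
  then have "card (V (h+1)) \<ge> 1" using Suc.hyps(1) by blast
  then show ?case using card_V_mono[of "h+1"] by simp
qed

lemma ell_nonneg: "1 \<le> i \<Longrightarrow> ell n E r i \<ge> 0"
  unfolding ell_def using card_V_mono[of i] by simp

lemma ell_big: "i > HH + 1 \<Longrightarrow> ell n E r i = 0"
  unfolding ell_def using V_empty[of i] V_empty[of "i-1"] by simp

lemma ell3: "ell n E r 3 \<ge> 1 \<and> ell n E r 3 \<ge> 2 * int (card (V 3))"
proof -
  have a: "3 * card (V 3) \<le> card (V 2)" using card_V[of 3] by simp
  have b: "card (V 2) \<ge> 1" using V_ne[of 2] H2 by simp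
  show ?thesis unfolding ell_def using a b by simp
qed

end


lemma tri_det:
  fixes B :: "real mat" and g :: "nat \<Rightarrow> nat"
  assumes B: "B \<in> carrier_mat n n"
    and tri: "\<And>i j. i < n \<Longrightarrow> j < n \<Longrightarrow> i \<noteq> j \<Longrightarrow> B $$ (i, j) \<noteq> 0 \<Longrightarrow> g j < g i"
  shows "det B = (\<Prod>i = 0..<n. B $$ (i, i))"
proof -
  let ?S = "{p. p permutes {0..<n}}"
  let ?f = "\<lambda>p. signof p * (\<Prod>i = 0..<n. B $$ (i, p i))"
  have z: "?f p = 0" if p: "p \<in> ?S" "p \<noteq> id" for p
  proof (rule ccontr)
    assume nz: "?f p \<noteq> 0"
    then have nzi: "B $$ (i, p i) \<noteq> 0" if "i \<in> {0..<n}" for i using that by auto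
    have pp: "p permutes {0..<n}" using p by simp
    have pin: "p i < n" if "i < n" for i using permutes_in_image[OF pp] that by simp
    have le: "g (p i) \<le> g i" if "i \<in> {0..<n}" for i
      using tri[of i "p i"] nzi[OF that] that pin by (cases "p i = i") auto
    obtain i where i: "p i \<noteq> i" using p(2) by (auto simp: fun_eq_iff)
    have "i \<in> {0..<n}" using i pp unfolding permutes_def by blast
    then have lt: "\<exists>i\<in>{0..<n}. g (p i) < g i" using tri[of i "p i"] nzi i pin by auto
    have "(\<Sum>i\<in>{0..<n}. g (p i)) < (\<Sum>i\<in>{0..<n}. g i)"
      using sum_strict_mono_ex1[OF _ _ lt] le by auto
    moreover have "(\<Sum>i\<in>{0..<n}. g (p i)) = (\<Sum>i\<in>{0..<n}. g i)"
    proof -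
      have "(\<Sum>i\<in>{0..<n}. g i) = (\<Sum>i\<in>p ` {0..<n}. g i)" using permutes_image[OF pp] by simp
      also have "\<dots> = (\<Sum>i\<in>{0..<n}. g (p i))"
        using sum.reindex[OF permutes_inj_on[OF pp]] by simp
      finally show ?thesis by simp
    qed
    ultimately show False by simp
  qed
  have idS: "id \<in> ?S" by (simp add: permutes_id)
  have "det B = sum ?f ?S" using det_def'[OF B] by simp
  also have "\<dots> = ?f id + sum ?f (?S - {id})"
    using sum.remove[OF _ idS, of ?f] by (simp add: finite_permutations)
  also have "?f id = (\<Prod>i = 0..<n. B $$ (i, i))" by (simp add: sign_id)
  also have "sum ?f (?S - {id}) = 0" using z by (intro sum.neutral) auto
  finally show ?thesis by simp
qed


locale hedgeA = hedge +
  fixes A :: "real mat" and a b :: "nat \<Rightarrow> real"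
  assumes A: "A \<in> carrier_mat n n"
    and Azero: "\<And>i j. i < n \<Longrightarrow> j < n \<Longrightarrow> i \<noteq> j \<Longrightarrow> \<not> E i j \<Longrightarrow> A $$ (i, j) = 0"
    and Apos: "\<And>i j. i < n \<Longrightarrow> j < n \<Longrightarrow> E i j \<Longrightarrow> A $$ (i, j) * A $$ (j, i) > 0"
    and Adiag: "\<And>v. v < n \<Longrightarrow> A $$ (v, v) = a (height n E r v + 1)"
    and Asum: "\<And>v. v < n \<Longrightarrow> \<not> is_leaf n E r v \<Longrightarrow>
       (\<Sum>u\<in>children n E r v. A $$ (v, u) * A $$ (u, v)) = b (height n E r v + 1)"
begin

abbreviation "ht v \<equiv> height n E r v"
definition Cs where "Cs s = {k. k < n \<and> k \<noteq> r \<and> par k = s}"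

lemma Cs_children: "s < n \<Longrightarrow> children n E r s = Cs s" using children_eq by (simp add: Cs_def)

lemma par_ne: "k < n \<Longrightarrow> k \<noteq> r \<Longrightarrow> par k \<noteq> k" using par[of k] by auto

lemma Cs_ht: "k \<in> Cs s \<Longrightarrow> ht k + 1 = ht s" using child_height unfolding Cs_def by auto

lemma Cs_dep: "k \<in> Cs s \<Longrightarrow> dep k = dep s + 1" using par[of k] unfolding Cs_def by auto

lemma Cs_fin: "finite (Cs s)" unfolding Cs_def by simp

context fixes x :: real
  assumes Pnz: "\<And>h. h \<le> HH + 1 \<Longrightarrow> poly (qp a b h) x \<noteq> 0"
begin

abbreviation "P h \<equiv> poly (qp a b h) x"
definition d where "d v = P (ht v + 1) / P (ht v)"
definition M where "M = mat n n (\<lambda>(i, j). (if i = j then x else 0) - A $$ (i, j))"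
definition L where "L = mat n n (\<lambda>(s, k). if s = k then 1 else if k \<in> Cs s then M $$ (s, k) / d k else 0)"
definition R where "R = mat n n (\<lambda>(k, t). if k = t then d k else if k \<noteq> r \<and> par k = t then M $$ (k, t) else 0)"

lemma d_nz: "v < n \<Longrightarrow> d v \<noteq> 0"
  unfolding d_def using Pnz height_le[of v] by simp

lemma M_idx: "i < n \<Longrightarrow> j < n \<Longrightarrow> M $$ (i, j) = (if i = j then x else 0) - A $$ (i, j)"
  unfolding M_def by simp

lemma LR_sum: assumes s: "s < n" and t: "t < n"
  shows "(\<Sum>k\<in>{0..<n}. L $$ (s, k) * R $$ (k, t)) = R $$ (s, t) + (\<Sum>k\<in>Cs s. M $$ (s, k) / d k * R $$ (k, t))"
proof -
  have sub: "insert s (Cs s) \<subseteq> {0..<n}" using s unfolding Cs_def by auto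
  have "(\<Sum>k\<in>{0..<n}. L $$ (s, k) * R $$ (k, t)) = (\<Sum>k\<in>insert s (Cs s). L $$ (s, k) * R $$ (k, t))"
    by (rule sum.mono_neutral_right[OF _ sub]) (auto simp: L_def s)
  also have "\<dots> = L $$ (s, s) * R $$ (s, t) + (\<Sum>k\<in>Cs s. L $$ (s, k) * R $$ (k, t))"
  proof -
    have "s \<notin> Cs s" using par_ne[of s] unfolding Cs_def by auto
    then show ?thesis by (intro sum.insert[OF Cs_fin])
  qed
  also have "(\<Sum>k\<in>Cs s. L $$ (s, k) * R $$ (k, t)) = (\<Sum>k\<in>Cs s. M $$ (s, k) / d k * R $$ (k, t))"
  proof (rule sum.cong)
    fix k assume k: "k \<in> Cs s"
    then have "k \<noteq> s" "k < n" using par_ne[of k] unfolding Cs_def by auto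
    then show "L $$ (s, k) * R $$ (k, t) = M $$ (s, k) / d k * R $$ (k, t)"
      using k s unfolding L_def by simp
  qed simp
  finally show ?thesis using s by (simp add: L_def)
qed

lemma R_child: assumes k: "k \<in> Cs s" and t: "t < n"
  shows "R $$ (k, t) = (if k = t then d k else if s = t then M $$ (k, t) else 0)"
  using k t unfolding R_def Cs_def by auto

lemma LR_entry: assumes s: "s < n" and t: "t < n"
  shows "(L * R) $$ (s, t) = M $$ (s, t)"
proof -
  have "(L * R) $$ (s, t) = (\<Sum>k\<in>{0..<n}. L $$ (s, k) * R $$ (k, t))"
    using s t by (simp add: L_def R_def scalar_prod_def)
  also have "\<dots> = R $$ (s, t) + (\<Sum>k\<in>Cs s. M $$ (s, k) / d k * R $$ (k, t))" by (rule LR_sum[OF s t])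
  also have "\<dots> = M $$ (s, t)"
  proof (cases "s = t")
    case True
    have "(\<Sum>k\<in>Cs s. M $$ (s, k) / d k * R $$ (k, t)) = (\<Sum>k\<in>Cs s. A $$ (s, k) * A $$ (k, s) / d k)"
    proof (rule sum.cong)
      fix k assume k: "k \<in> Cs s"
      then have "k \<noteq> s" "k < n" using par_ne[of k] unfolding Cs_def by auto
      then show "M $$ (s, k) / d k * R $$ (k, t) = A $$ (s, k) * A $$ (k, s) / d k"
        using R_child[OF k t] True s by (simp add: M_idx)
    qed simp
    also have "\<dots> = (\<Sum>k\<in>Cs s. A $$ (s, k) * A $$ (k, s)) * (P (ht s - 1) / P (ht s))"
      unfolding sum_distrib_right
    proof (rule sum.cong)
      fix k assume k: "k \<in> Cs s"
      have "ht k + 1 = ht s" using Cs_ht[OF k] .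
      then have "d k = P (ht s) / P (ht s - 1)" unfolding d_def by (metis add_diff_cancel_right')
      then show "A $$ (s, k) * A $$ (k, s) / d k = A $$ (s, k) * A $$ (k, s) * (P (ht s - 1) / P (ht s))"
        by (simp add: divide_divide_eq_right)
    qed simp
    finally have S: "(\<Sum>k\<in>Cs s. M $$ (s, k) / d k * R $$ (k, t)) = (\<Sum>k\<in>Cs s. A $$ (s, k) * A $$ (k, s)) * (P (ht s - 1) / P (ht s))" .
    have Rss: "R $$ (s, t) = d s" using True s by (simp add: R_def)
    show ?thesis
    proof (cases "Cs s = {}")
      case True
      then have "is_leaf n E r s" using nochild_leaf[OF s] unfolding Cs_def by blast
      then have "ht s = 0" by (rule leaf_height)
      then show ?thesis using S True Rss \<open>s = t\<close> s Adiag[OF s] by (simp add: d_def M_idx)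
    next
      case False
      then obtain k where k: "k \<in> Cs s" by blast
      then have nl: "\<not> is_leaf n E r s" using child_nonleaf[of k s] unfolding Cs_def by auto
      have h1: "ht s \<ge> 1" using Cs_ht[OF k] by simp
      have sb: "(\<Sum>k\<in>Cs s. A $$ (s, k) * A $$ (k, s)) = b (ht s + 1)"
        using Asum[OF s nl] Cs_children[OF s] by simp
      have Ph: "P (ht s) \<noteq> 0" using Pnz height_le[OF s] by simp
      have rec: "P (ht s + 1) = (x - a (ht s + 1)) * P (ht s) - b (ht s + 1) * P (ht s - 1)"
        using qp_eval2[of "ht s + 1" a b x] h1 by simp
      show ?thesis unfolding S Rss sb using \<open>s = t\<close> s Adiag[OF s] Ph rec
        by (simp add: d_def M_idx field_simps)
    qed
  next
    case False
    have S: "(\<Sum>k\<in>Cs s. M $$ (s, k) / d k * R $$ (k, t)) = (if t \<in> Cs s then M $$ (s, t) else 0)"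
    proof -
      have "(\<Sum>k\<in>Cs s. M $$ (s, k) / d k * R $$ (k, t)) = (\<Sum>k\<in>Cs s. if k = t then M $$ (s, k) else 0)"
      proof (rule sum.cong)
        fix k assume k: "k \<in> Cs s"
        then have "k < n" unfolding Cs_def by auto
        then show "M $$ (s, k) / d k * R $$ (k, t) = (if k = t then M $$ (s, k) else 0)"
          using R_child[OF k t] False d_nz by simp
      qed simp
      also have "\<dots> = (if t \<in> Cs s then M $$ (s, t) else 0)"
        using Cs_fin by (simp add: sum.delta')
      finally show ?thesis .
    qed
    show ?thesis
    proof (cases "t \<in> Cs s")
      case True
      then have "R $$ (s, t) = 0" using False s t par[of t] par[of s] unfolding R_def Cs_def by auto
      then show ?thesis using S True by simp
    next
      case nC: False
      show ?thesis
      proof (cases "s \<noteq> r \<and> par s = t")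
        case True
        then show ?thesis using S nC False s t unfolding R_def by simp
      next
        case nP: False
        have "\<not> E s t" using edge_par[of s t] nC nP t unfolding Cs_def by auto
        then have "M $$ (s, t) = 0" using Azero[OF s t False] False s t by (simp add: M_idx)
        then show ?thesis using S nC nP False s t unfolding R_def by simp
      qed
    qed
  qed
  finally show ?thesis .
qed

lemma M_eq: "M = L * R"
proof (rule eq_matI)
  have dims: "dim_row (L * R) = n" "dim_col (L * R) = n" by (simp_all add: L_def R_def)
  show "dim_row M = dim_row (L * R)" "dim_col M = dim_col (L * R)" using dims by (simp_all add: M_def)
  fix i j assume "i < dim_row (L * R)" "j < dim_col (L * R)"
  then show "M $$ (i, j) = (L * R) $$ (i, j)" using LR_entry dims by simp
qed

lemma det_L: "det L = 1"
proof -
  have "det L = (\<Prod>i = 0..<n. L $$ (i, i))"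
  proof (rule tri_det[of L n ht])
    show "L \<in> carrier_mat n n" by (simp add: L_def)
    fix i j assume "i < n" "j < n" "i \<noteq> j" "L $$ (i, j) \<noteq> 0"
    then have "j \<in> Cs i" unfolding L_def by (auto split: if_splits)
    then show "ht j < ht i" using Cs_ht by fastforce
  qed
  then show ?thesis by (simp add: L_def)
qed

lemma det_R: "det R = (\<Prod>i = 0..<n. d i)"
proof -
  have "det R = (\<Prod>i = 0..<n. R $$ (i, i))"
  proof (rule tri_det[of R n dep])
    show "R \<in> carrier_mat n n" by (simp add: R_def)
    fix i j assume "i < n" "j < n" "i \<noteq> j" "R $$ (i, j) \<noteq> 0"
    then have "i \<noteq> r" "par i = j" unfolding R_def by (auto split: if_splits)
    then show "dep j < dep i" using par[of i] \<open>i < n\<close> by auto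
  qed
  then show ?thesis by (simp add: R_def)
qed

lemma charpoly_eval: "poly (char_poly A) x = (\<Prod>i = 0..<n. d i)"
proof -
  have "poly (char_poly A) x = det (- char_matrix A x)" by (rule char_poly_matrix[OF A])
  also have "- char_matrix A x = M"
    using A by (intro eq_matI) (auto simp: M_def char_matrix_def)
  also have "det M = det L * det R" unfolding M_eq by (rule det_mult[of _ n]) (auto simp: L_def R_def)
  finally show ?thesis using det_L det_R by simp
qed

end
end


lemma order_prod_gen:
  fixes f :: "nat \<Rightarrow> real poly"
  assumes "finite S" "\<forall>i\<in>S. f i \<noteq> 0"
  shows "order x (\<Prod>i\<in>S. f i) = (\<Sum>i\<in>S. order x (f i))"
  using assms
proof (induction S rule: finite_induct)
  case empty then show ?case by (simp add: order_1)
next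
  case (insert j S)
  have "f j * (\<Prod>i\<in>S. f i) \<noteq> 0" using insert by (simp add: prod_zero_iff)
  then show ?case using insert by (simp add: order_mult)
qed

lemma poly_eq_cofinite:
  fixes p q :: "real poly"
  assumes Z: "finite Z" and eq: "\<And>x. x \<notin> Z \<Longrightarrow> poly p x = poly q x"
  shows "p = q"
proof (rule ccontr)
  assume "p \<noteq> q"
  then have "p - q \<noteq> 0" by simp
  then have f: "finite {x. poly (p - q) x = 0}" by (rule poly_roots_finite)
  have "UNIV \<subseteq> Z \<union> {x. poly (p - q) x = 0}" using eq by auto
  then have "finite (UNIV :: real set)" using f Z finite_subset by blast
  then show False using infinite_UNIV_char_0 by blast
qed

lemma tele:
  fixes c w :: "nat \<Rightarrow> int"
  shows "(\<Sum>i\<in>{1..N}. (c (i - 1) - c i) * w i) = (\<Sum>h<N. c h * (w (h+1) - w h)) - c N * w N + c 0 * w 0"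
proof (induction N)
  case 0 then show ?case by simp
next
  case (Suc N)
  have "{1..Suc N} = insert (Suc N) {1..N}" by auto
  then have "(\<Sum>i\<in>{1..Suc N}. (c (i - 1) - c i) * w i) = (c N - c (Suc N)) * w (Suc N) + (\<Sum>i\<in>{1..N}. (c (i - 1) - c i) * w i)"
    by simp
  then show ?case using Suc by (simp add: algebra_simps)
qed

context hedgeA begin

lemma bpos: assumes k: "2 \<le> k" "k \<le> HH + 1" shows "b k > 0"
proof -
  have "card (V (k - 1)) \<ge> 1" using V_ne[of "k-1"] k by simp
  then obtain v where v: "v \<in> V (k - 1)" by (metis card.empty card_ge_0_finite not_one_le_zero all_not_in_conv)
  then have vn: "v < n" and hv: "ht v = k - 1" by (auto simp: Vset_def)
  have nl: "\<not> is_leaf n E r v" using leaf_height hv k by auto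
  obtain y where y: "y < n" "y \<noteq> r" "par y = v" using nonleaf_child[OF vn nl] by blast
  have ne: "children n E r v \<noteq> {}" using y children_eq[OF vn] by auto
  have "(\<Sum>u\<in>children n E r v. A $$ (v, u) * A $$ (u, v)) > 0"
  proof (rule sum_pos)
    show "finite (children n E r v)" by (simp add: children_def)
    show "children n E r v \<noteq> {}" by (rule ne)
    fix u assume "u \<in> children n E r v"
    then have u: "u < n" "u \<noteq> r" "par u = v" using children_eq[OF vn] by auto
    then have "E v u" using par[of u] by auto
    then show "A $$ (v, u) * A $$ (u, v) > 0" using Apos vn u(1) by simp
  qed
  then show ?thesis using Asum[OF vn nl] hv k by simp
qed

lemma qnz: "h \<le> HH + 1 \<Longrightarrow> qp a b h \<noteq> 0"
  using qp_nz[of h b a] bpos by auto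

definition Z where "Z = (\<Union>h\<in>{..HH+1}. {x. poly (qp a b h) x = 0})"

lemma Z_fin: "finite Z"
  unfolding Z_def using qnz poly_roots_finite by auto

lemma poly_ident: "char_poly A * (\<Prod>v\<in>{0..<n}. qp a b (ht v)) = (\<Prod>v\<in>{0..<n}. qp a b (ht v + 1))"
proof (rule poly_eq_cofinite[OF Z_fin])
  fix x assume x: "x \<notin> Z"
  then have Pnz: "\<And>h. h \<le> HH + 1 \<Longrightarrow> poly (qp a b h) x \<noteq> 0" unfolding Z_def by auto
  have ev: "poly (char_poly A) x = (\<Prod>i = 0..<n. d x i)" by (rule charpoly_eval[OF Pnz])
  have nz: "poly (qp a b (ht v)) x \<noteq> 0" if "v \<in> {0..<n}" for v using Pnz[of "ht v"] height_le[of v] that by simp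
  have "(\<Prod>i = 0..<n. d x i) = (\<Prod>v\<in>{0..<n}. poly (qp a b (ht v + 1)) x) / (\<Prod>v\<in>{0..<n}. poly (qp a b (ht v)) x)"
  proof -
    have "(\<Prod>i = 0..<n. d x i) = (\<Prod>v\<in>{0..<n}. poly (qp a b (ht v + 1)) x / poly (qp a b (ht v)) x)"
      by (rule prod.cong) (simp_all add: d_def[OF Pnz])
    then show ?thesis by (simp add: prod_dividef)
  qed
  moreover have "(\<Prod>v\<in>{0..<n}. poly (qp a b (ht v)) x) \<noteq> 0" using nz by simp
  ultimately show "poly (char_poly A * (\<Prod>v\<in>{0..<n}. qp a b (ht v))) x = poly (\<Prod>v\<in>{0..<n}. qp a b (ht v + 1)) x"
    using ev by (simp add: poly_prod)
qed

abbreviation "ordq x h \<equiv> int (order x (qp a b h))"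

lemma mult_sum: "int (mult x A) = (\<Sum>v\<in>{0..<n}. ordq x (ht v + 1) - ordq x (ht v))"
proof -
  have hl: "ht v \<le> HH + 1" "ht v + 1 \<le> HH + 1" if "v \<in> {0..<n}" for v using height_le[of v] that by simp_all
  have nz1: "\<forall>v\<in>{0..<n}. qp a b (ht v) \<noteq> 0" using hl(1) qnz by blast
  have nz2: "\<forall>v\<in>{0..<n}. qp a b (ht v + 1) \<noteq> 0" using hl(2) qnz by blast
  have pr: "(\<Prod>v\<in>{0..<n}. qp a b (ht v + 1)) \<noteq> 0" using nz2 by simp
  have e1: "order x (char_poly A * (\<Prod>v\<in>{0..<n}. qp a b (ht v))) = order x (char_poly A) + order x (\<Prod>v\<in>{0..<n}. qp a b (ht v))"
    by (rule order_mult) (simp only: poly_ident pr not_False_eq_True)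
  have e2: "order x (\<Prod>v\<in>{0..<n}. qp a b (ht v)) = (\<Sum>v\<in>{0..<n}. order x (qp a b (ht v)))"
    by (rule order_prod_gen[OF _ nz1]) simp
  have e3: "order x (\<Prod>v\<in>{0..<n}. qp a b (ht v + 1)) = (\<Sum>v\<in>{0..<n}. order x (qp a b (ht v + 1)))"
    by (rule order_prod_gen[OF _ nz2]) simp
  have e4: "order x (char_poly A * (\<Prod>v\<in>{0..<n}. qp a b (ht v))) = order x (\<Prod>v\<in>{0..<n}. qp a b (ht v + 1))"
    by (simp only: poly_ident)
  have "order x (char_poly A) + (\<Sum>v\<in>{0..<n}. order x (qp a b (ht v))) = (\<Sum>v\<in>{0..<n}. order x (qp a b (ht v + 1)))"
    using e1 e2 e3 e4 by linarith
  then have "int (order x (char_poly A)) + int (\<Sum>v\<in>{0..<n}. order x (qp a b (ht v))) = int (\<Sum>v\<in>{0..<n}. order x (qp a b (ht v + 1)))"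
    by (simp only: of_nat_add[symmetric])
  then have "int (order x (char_poly A)) + (\<Sum>v\<in>{0..<n}. ordq x (ht v)) = (\<Sum>v\<in>{0..<n}. ordq x (ht v + 1))"
    by (simp only: of_nat_sum)
  then show ?thesis unfolding mult_def by (simp add: sum_subtractf)
qed

lemma group_ht: assumes N: "N > HH"
  shows "(\<Sum>v\<in>{0..<n}. F (ht v)) = (\<Sum>h<N. of_nat (card (V h)) * (F h :: int))"
proof -
  have img: "ht ` {0..<n} \<subseteq> {..<N}" using height_le N by fastforce
  have "(\<Sum>v\<in>{0..<n}. F (ht v)) = (\<Sum>h\<in>{..<N}. \<Sum>v\<in>{v. v \<in> {0..<n} \<and> ht v = h}. F (ht v))"
    using sum.group[OF _ _ img, of "\<lambda>v. F (ht v)"] by simp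
  also have "\<dots> = (\<Sum>h<N. of_nat (card (V h)) * F h)"
  proof (rule sum.cong)
    fix h assume "h \<in> {..<N}"
    have "{v. v \<in> {0..<n} \<and> ht v = h} = V h" by (auto simp: Vset_def)
    moreover have "(\<Sum>v\<in>V h. F (ht v)) = (\<Sum>v\<in>V h. F h)" by (rule sum.cong) (auto simp: Vset_def)
    ultimately show "(\<Sum>v\<in>{v. v \<in> {0..<n} \<and> ht v = h}. F (ht v)) = of_nat (card (V h)) * F h" by simp
  qed simp
  finally show ?thesis .
qed

lemma mult_ell: assumes N: "N > HH"
  shows "int (mult x A) = (\<Sum>i\<in>{1..N}. ell n E r i * ordq x i)"
proof -
  have "int (mult x A) = (\<Sum>h<N. of_nat (card (V h)) * (ordq x (h + 1) - ordq x h))"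
    unfolding mult_sum by (rule group_ht[OF N])
  moreover have "(\<Sum>i\<in>{1..N}. ell n E r i * ordq x i)
     = (\<Sum>h<N. int (card (V h)) * (ordq x (h+1) - ordq x h)) - int (card (V N)) * ordq x N + int (card (V 0)) * ordq x 0"
    unfolding ell_def by (rule tele)
  moreover have "card (V N) = 0" using V_empty N by simp
  moreover have "order x (qp a b 0) = 0" by (simp add: order_1)
  ultimately show ?thesis by simp
qed

end


lemma tele2:
  fixes c :: "nat \<Rightarrow> int"
  shows "N \<ge> 3 \<Longrightarrow> (\<Sum>i\<in>{4..N}. c (i - 1) - c i) = c 3 - c N"
proof (induction N rule: dec_induct)
  case base then show ?case by simp
next
  case (step m)
  have "{4..Suc m} = insert (Suc m) {4..m}" using step by auto
  then show ?case using step by simp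
qed

lemma Cmat_diag: "1 \<le> k \<Longrightarrow> k \<le> N \<Longrightarrow> Cmat a1 a2 b2 b3 b4 N k k = Ca a1 a2 b2 b3 b4 (N + 1 - k)"
  by (simp add: Cmat_def)
lemma Cmat_sup: "1 \<le> k \<Longrightarrow> k + 1 \<le> N \<Longrightarrow> Cmat a1 a2 b2 b3 b4 N k (k+1) = Cb a1 a2 b2 b3 b4 (N + 1 - k)"
  by (simp add: Cmat_def)
lemma Cmat_sub: "1 \<le> k \<Longrightarrow> k + 1 \<le> N \<Longrightarrow> Cmat a1 a2 b2 b3 b4 N (k+1) k = 1"
  by (simp add: Cmat_def)

lemma inB_facts: assumes "inB a1 a2 b2 b3 b4"
  shows "distinct [a1, a2, b2, b3, b4]" "a2 + b2 \<noteq> b3 + b4"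
  using assms unfolding inB_def by (auto; linarith)+

context hedgeA begin

lemma n_big: "HH < n + 1"
proof -
  have "(\<Sum>v\<in>{0..<n}. (1::int)) = (\<Sum>h<HH+1. of_nat (card (V h)) * 1)"
    using group_ht[of "HH+1" "\<lambda>_. 1"] by simp
  moreover have "(\<Sum>h<HH+1. of_nat (card (V h)) * (1::int)) \<ge> (\<Sum>h<HH+1. 1)"
    using V_ne by (intro sum_mono) simp
  ultimately show ?thesis by simp
qed

lemma lower: assumes I: "I \<subseteq> {1..N}" and N: "N > HH"
  and root: "\<And>i. i \<in> I \<Longrightarrow> i \<le> HH + 1 \<Longrightarrow> poly (qp a b i) x = 0"
  shows "(\<Sum>i\<in>I. ell n E r i) \<le> int (mult x A)"
proof -
  have "(\<Sum>i\<in>I. ell n E r i) \<le> (\<Sum>i\<in>I. ell n E r i * ordq x i)"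
  proof (rule sum_mono)
    fix i assume i: "i \<in> I"
    then have i1: "i \<ge> 1" using I by auto
    show "ell n E r i \<le> ell n E r i * ordq x i"
    proof (cases "i \<le> HH + 1")
      case True
      then have "order x (qp a b i) \<noteq> 0" using root[OF i True] qnz[OF True] order_root by blast
      then have "ordq x i \<ge> 1" by simp
      then show ?thesis using ell_nonneg[OF i1] by (simp add: mult_le_cancel_left1)
    next
      case False then show ?thesis using ell_big[of i] by simp
    qed
  qed
  also have "\<dots> \<le> (\<Sum>i\<in>{1..N}. ell n E r i * ordq x i)"
    using I ell_nonneg by (intro sum_mono2) auto
  also have "\<dots> = int (mult x A)" using mult_ell[OF N] by simp
  finally show ?thesis .
qed

lemma upper: assumes N: "N > HH"
  and z: "\<And>i. 1 \<le> i \<Longrightarrow> i \<le> 3 \<Longrightarrow> poly (qp a b i) x \<noteq> 0"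
  shows "int (mult x A) \<le> int (card (V 3))"
proof -
  have N3: "N \<ge> 3" using N H2 by simp
  have o0: "ordq x i = 0" if "1 \<le> i" "i \<le> 3" for i
    using z[OF that] order_root by (metis of_nat_0)
  have "int (mult x A) = (\<Sum>i\<in>{1..N}. ell n E r i * ordq x i)" using mult_ell[OF N] .
  also have "\<dots> = (\<Sum>i\<in>{4..N}. ell n E r i * ordq x i)"
  proof (rule sum.mono_neutral_right)
    show "\<forall>i\<in>{1..N} - {4..N}. ell n E r i * ordq x i = 0"
    proof
      fix i assume "i \<in> {1..N} - {4..N}"
      then have "1 \<le> i" "i \<le> 3" by auto
      then show "ell n E r i * ordq x i = 0" using o0 by simp
    qed
  qed auto
  also have "\<dots> \<le> (\<Sum>i\<in>{4..N}. ell n E r i)"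
  proof (rule sum_mono)
    fix i assume i: "i \<in> {4..N}"
    show "ell n E r i * ordq x i \<le> ell n E r i"
    proof (cases "i \<le> HH + 1")
      case True
      have "order x (qp a b i) \<le> 1" using order_le1[of i b x a] bpos True i by auto
      then show ?thesis using ell_nonneg[of i] i by (simp add: mult_le_cancel_left2)
    next
      case False then show ?thesis using ell_big[of i] by simp
    qed
  qed
  also have "\<dots> = int (card (V 3)) - int (card (V N))" unfolding ell_def using tele2[OF N3] by simp
  also have "card (V N) = 0" using V_empty N by simp
  finally show ?thesis by simp
qed

end


theorem mainTheorem7:
  fixes n :: nat and E :: "nat \<Rightarrow> nat \<Rightarrow> bool" and r :: nat
    and a1 a2 b2 b3 b4 :: real and A :: "real mat"
  assumes "is_lush n E r"
    and "hedge_height n E r \<ge> 2"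
    and "inB a1 a2 b2 b3 b4"
    and "A \<in> PH (Cmat a1 a2 b2 b3 b4 (hedge_height n E r + 1)) n E r"
  shows "has_critical_mult_list n E r A \<and> witnesses_critical n E r A a1 a2 b2 b3 b4"
proof -
  interpret hedge n E r using assms(1,2) by unfold_locales
  let ?a = "Ca a1 a2 b2 b3 b4" and ?b = "Cb a1 a2 b2 b3 b4"
  let ?c = "Cmat a1 a2 b2 b3 b4 (HH + 1)"
  let ?pr = "\<lambda>v. HH + 1 - height n E r v"
  have PHu: "A \<in> matR n E" "\<forall>v<n. A $$ (v, v) = ?c (?pr v) (?pr v)"
    "\<forall>v<n. \<not> is_leaf n E r v \<longrightarrow>
          (\<Sum>u\<in>children n E r v. A $$ (v, u) * A $$ (u, v)) = ?c (?pr v) (?pr v + 1) * ?c (?pr v + 1) (?pr v)"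
    using assms(4) unfolding PH_def Let_def by auto
  have mR: "A \<in> carrier_mat n n" "\<forall>i<n. \<forall>j<n. i \<noteq> j \<longrightarrow> (A $$ (i, j) \<noteq> 0 \<longleftrightarrow> E i j)"
    "\<forall>i<n. \<forall>j<n. E i j \<longrightarrow> A $$ (i, j) * A $$ (j, i) > 0" using PHu(1) unfolding matR_def by auto
  interpret hA: hedgeA n E r A ?a ?b
  proof unfold_locales
    show "A \<in> carrier_mat n n" by (rule mR(1))
    show "\<And>i j. i < n \<Longrightarrow> j < n \<Longrightarrow> i \<noteq> j \<Longrightarrow> \<not> E i j \<Longrightarrow> A $$ (i, j) = 0" using mR(2) by blast
    show "\<And>i j. i < n \<Longrightarrow> j < n \<Longrightarrow> E i j \<Longrightarrow> A $$ (i, j) * A $$ (j, i) > 0" using mR(3) by blast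
    show "A $$ (v, v) = ?a (height n E r v + 1)" if v: "v < n" for v
    proof -
      have h: "height n E r v \<le> HH" using height_le[OF v] .
      have "?c (?pr v) (?pr v) = ?a (HH + 1 + 1 - ?pr v)" using h by (intro Cmat_diag) auto
      also have "HH + 1 + 1 - ?pr v = height n E r v + 1" using h by simp
      finally show ?thesis using PHu(2) v by simp
    qed
    show "(\<Sum>u\<in>children n E r v. A $$ (v, u) * A $$ (u, v)) = ?b (height n E r v + 1)"
      if v: "v < n" and nl: "\<not> is_leaf n E r v" for v
    proof -
      have h: "height n E r v \<le> HH" using height_le[OF v] .
      obtain y where y: "y < n" "y \<noteq> r" "par y = v" using nonleaf_child[OF v nl] by blast
      have h1: "height n E r v \<ge> 1" using haschild_height[OF y] .
      have "?c (?pr v) (?pr v + 1) = ?b (HH + 1 + 1 - ?pr v)" using h h1 by (intro Cmat_sup) auto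
      also have "HH + 1 + 1 - ?pr v = height n E r v + 1" using h by simp
      finally have e1: "?c (?pr v) (?pr v + 1) = ?b (height n E r v + 1)" .
      have e2: "?c (?pr v + 1) (?pr v) = 1" using h h1 by (intro Cmat_sub) auto
      show ?thesis using PHu(3) v nl e1 e2 by simp
    qed
  qed
  have dB: "distinct [a1, a2, b2, b3, b4]" and gB: "a2 + b2 \<noteq> b3 + b4" using inB_facts[OF assms(3)] by auto
  interpret pm: prm a1 a2 b2 b3 b4 .
  have Qe: "pm.Q i x = poly (qp ?a ?b i) x" for i x by (simp add: pm.Q_def)
  have b42: "b4 \<noteq> b2" using dB by auto
  define N where "N = n + 1"
  have N: "N > HH" using hA.n_big unfolding N_def .
  have l1: "(\<Sum>i\<in>{i. 1 \<le> i \<and> i \<le> n + 1 \<and> i mod 2 = 1 mod 2}. ell n E r i) \<le> int (mult a1 A)"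
  proof (rule hA.lower[OF _ N])
    show "{i. 1 \<le> i \<and> i \<le> n + 1 \<and> i mod 2 = 1 mod 2} \<subseteq> {1..N}" unfolding N_def by auto
    fix i assume "i \<in> {i. 1 \<le> i \<and> i \<le> n + 1 \<and> i mod 2 = 1 mod 2}"
    then have "odd i" by (auto simp: odd_iff_mod_2_eq_one)
    then show "poly (qp ?a ?b i) a1 = 0" using pm.alpha_roots[of i] Qe by simp
  qed
  have l2: "(\<Sum>i\<in>{i. 2 \<le> i \<and> i \<le> n + 1 \<and> i mod 2 = 2 mod 2}. ell n E r i) \<le> int (mult a2 A)"
  proof (rule hA.lower[OF _ N])
    show "{i. 2 \<le> i \<and> i \<le> n + 1 \<and> i mod 2 = 2 mod 2} \<subseteq> {1..N}" unfolding N_def by auto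
    fix i assume i: "i \<in> {i. 2 \<le> i \<and> i \<le> n + 1 \<and> i mod 2 = 2 mod 2}"
    then have "even i" "i \<ge> 2" by (auto simp: even_iff_mod_2_eq_zero)
    then show "poly (qp ?a ?b i) a2 = 0" using pm.alpha_roots[of i] Qe by simp
  qed
  have l3: "(\<Sum>i\<in>{i. 2 \<le> i \<and> i \<le> n + 1 \<and> i mod 3 = 2 mod 3}. ell n E r i) \<le> int (mult b2 A)"
  proof (rule hA.lower[OF _ N])
    show "{i. 2 \<le> i \<and> i \<le> n + 1 \<and> i mod 3 = 2 mod 3} \<subseteq> {1..N}" unfolding N_def by auto
    fix i assume i: "i \<in> {i. 2 \<le> i \<and> i \<le> n + 1 \<and> i mod 3 = 2 mod 3}"
    then have m: "i mod 3 = 2" by simp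
    have "i = 2 + 3 * (i div 3)" using div_mult_mod_eq[of i 3] m by linarith
    then obtain k where "i = 2 + 3 * k" by blast
    then show "poly (qp ?a ?b i) b2 = 0" using pm.beta_roots[OF b42, of k] Qe by simp
  qed
  have l4: "(\<Sum>i\<in>{i. 3 \<le> i \<and> i \<le> n + 1 \<and> i mod 3 = 3 mod 3}. ell n E r i) \<le> int (mult b3 A)"
  proof (rule hA.lower[OF _ N])
    show "{i. 3 \<le> i \<and> i \<le> n + 1 \<and> i mod 3 = 3 mod 3} \<subseteq> {1..N}" unfolding N_def by auto
    fix i assume i: "i \<in> {i. 3 \<le> i \<and> i \<le> n + 1 \<and> i mod 3 = 3 mod 3}"
    then have m: "i mod 3 = 0" "i \<ge> 3" by simp_all
    have "i = 3 + 3 * (i div 3 - 1)" using div_mult_mod_eq[of i 3] m by linarith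
    then obtain k where "i = 3 + 3 * k" by blast
    then show "poly (qp ?a ?b i) b3 = 0" using pm.beta_roots[OF b42, of k] Qe by simp
  qed
  have l5: "(\<Sum>i\<in>{i. 4 \<le> i \<and> i \<le> n + 1 \<and> i mod 3 = 4 mod 3}. ell n E r i) \<le> int (mult b4 A)"
  proof (rule hA.lower[OF _ N])
    show "{i. 4 \<le> i \<and> i \<le> n + 1 \<and> i mod 3 = 4 mod 3} \<subseteq> {1..N}" unfolding N_def by auto
    fix i assume i: "i \<in> {i. 4 \<le> i \<and> i \<le> n + 1 \<and> i mod 3 = 4 mod 3}"
    then have m: "i mod 3 = 1" "i \<ge> 4" by simp_all
    have "i = 4 + 3 * (i div 3 - 1)" using div_mult_mod_eq[of i 3] m by linarith
    then obtain k where "i = 4 + 3 * k" by blast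
    then show "poly (qp ?a ?b i) b4 = 0" using pm.beta_roots[OF b42, of k] Qe by simp
  qed
  have u: "int (mult b4 A) \<le> int (card (V 3))"
  proof (rule hA.upper[OF N])
    fix i :: nat assume "1 \<le> i" "i \<le> 3"
    then have "i = 1 \<or> i = 2 \<or> i = 3" by auto
    then have "i mod 3 \<noteq> 1 \<or> i \<le> 1" by auto
    then show "poly (qp ?a ?b i) b4 \<noteq> 0" using pm.b4_nonroot[OF dB gB] Qe by simp
  qed
  have l6: "int (mult b4 A) < ell n E r 3" using u ell3 by linarith
  have w: "witnesses_critical n E r A a1 a2 b2 b3 b4"
    unfolding witnesses_critical_def using dB l1 l2 l3 l4 l5 l6 by simp
  then show ?thesis unfolding has_critical_mult_list_def by blast
qed


end
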